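(* Let $G=(V,E)$ be a finite simple graph which is $S_{1,1,5}$-free, $K_4$-free, diamond-free and butterfly-free. Let $xy\in E$ and let $r$ be a vertex with $rx\in E$ and $ry\notin E$. For $i\ge 1$ let $N_i=\{z\in V:\operatorname{dist}_G(z,\{x,y\})=i\}$. Assume $N_2=\{u_1,\dots,u_k\}$ is an independent set, and for each $i$ let $T_i$ be the set of vertices $t\in N_3$ whose only neighbor in $N_2$ is $u_i$. If $|N_2|\ge 5$, then there is no induced path $(u_i,t_i,z_1,z_2,z_3)$ with $t_i\in T_i$, $z_1\in N_4$, $z_2\in N_4\cup N_5$ and $z_3\in N_4\cup N_5\cup N_6$.
   Context: $S_{1,1,5}$ is the tree with a center $u$ adjacent to $a$, $b$ and $z_1$, where $u,z_1,\dots,z_5$ is an induced path, and no other edges. A diamond is $K_4$ minus one edge; a butterfly consists of two disjoint edges (inducing $2K_2$) together with a vertex adjacent to all four of their endpoints. $\operatorname{dist}_G(z,\{x,y\})$ is the minimum of the distances from $z$ to $x$ and to $y$. *)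

theory Defs
  imports Main
begin

definition simple_graph :: "'a set \<Rightarrow> ('a \<Rightarrow> 'a \<Rightarrow> bool) \<Rightarrow> bool" where
  "simple_graph V E \<longleftrightarrow> finite V \<and> (\<forall>a b. E a b \<longrightarrow> a \<in> V \<and> b \<in> V)
     \<and> (\<forall>a b. E a b \<longrightarrow> E b a) \<and> (\<forall>a. \<not> E a a)"

text \<open>Pattern graphs H on vertex set {0..<n}, given by an edge list (symmetrised).\<close>
definition pat :: "(nat \<times> nat) list \<Rightarrow> nat \<Rightarrow> nat \<Rightarrow> bool" where
  "pat es i j \<longleftrightarrow> (i, j) \<in> set es \<or> (j, i) \<in> set es"

definition contains_induced ::
  "'a set \<Rightarrow> ('a \<Rightarrow> 'a \<Rightarrow> bool) \<Rightarrow> nat \<Rightarrow> (nat \<Rightarrow> nat \<Rightarrow> bool) \<Rightarrow> bool" where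
  "contains_induced V E n H \<longleftrightarrow> (\<exists>f. inj_on f {..<n} \<and> f ` {..<n} \<subseteq> V \<and>
     (\<forall>i<n. \<forall>j<n. E (f i) (f j) \<longleftrightarrow> H i j))"

text \<open>S_{1,1,5}: centre 0 = u, leaves 1 = a, 2 = b, path u,3,4,5,6,7 = u,z1..z5.\<close>
definition S115 :: "nat \<Rightarrow> nat \<Rightarrow> bool" where
  "S115 = pat [(0,1),(0,2),(0,3),(3,4),(4,5),(5,6),(6,7)]"

definition K4 :: "nat \<Rightarrow> nat \<Rightarrow> bool" where
  "K4 = pat [(0,1),(0,2),(0,3),(1,2),(1,3),(2,3)]"

definition diamond :: "nat \<Rightarrow> nat \<Rightarrow> bool" where
  "diamond = pat [(0,1),(0,2),(0,3),(1,2),(1,3)]"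

definition butterfly :: "nat \<Rightarrow> nat \<Rightarrow> bool" where
  "butterfly = pat [(0,1),(2,3),(4,0),(4,1),(4,2),(4,3)]"

fun walk :: "'a set \<Rightarrow> ('a \<Rightarrow> 'a \<Rightarrow> bool) \<Rightarrow> nat \<Rightarrow> 'a \<Rightarrow> 'a \<Rightarrow> bool" where
  "walk V E 0 a b \<longleftrightarrow> a = b \<and> a \<in> V"
| "walk V E (Suc n) a b \<longleftrightarrow> (\<exists>c. E a c \<and> walk V E n c b)"

definition dist_set_eq :: "'a set \<Rightarrow> ('a \<Rightarrow> 'a \<Rightarrow> bool) \<Rightarrow> 'a \<Rightarrow> 'a set \<Rightarrow> nat \<Rightarrow> bool" where
  "dist_set_eq V E z S i \<longleftrightarrow> (\<exists>s\<in>S. walk V E i s z) \<and> (\<forall>j<i. \<forall>s\<in>S. \<not> walk V E j s z)"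

definition layer :: "'a set \<Rightarrow> ('a \<Rightarrow> 'a \<Rightarrow> bool) \<Rightarrow> 'a \<Rightarrow> 'a \<Rightarrow> nat \<Rightarrow> 'a set" where
  "layer V E x y i = {z \<in> V. dist_set_eq V E z {x, y} i}"

definition independent :: "('a \<Rightarrow> 'a \<Rightarrow> bool) \<Rightarrow> 'a set \<Rightarrow> bool" where
  "independent E S \<longleftrightarrow> (\<forall>a\<in>S. \<forall>b\<in>S. \<not> E a b)"

definition induced_path :: "'a set \<Rightarrow> ('a \<Rightarrow> 'a \<Rightarrow> bool) \<Rightarrow> 'a list \<Rightarrow> bool" where
  "induced_path V E ps \<longleftrightarrow> distinct ps \<and> set ps \<subseteq> V \<and>
     (\<forall>i<length ps. \<forall>j<length ps. E (ps ! i) (ps ! j) \<longleftrightarrow> (i = j + 1 \<or> j = i + 1))"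

end

theory Submission
  imports Defs
begin


lemma sg_sym: "simple_graph V E \<Longrightarrow> E a b \<Longrightarrow> E b a" by (simp add: simple_graph_def)
lemma sg_irr: "simple_graph V E \<Longrightarrow> \<not> E a a" by (simp add: simple_graph_def)
lemma sg_V: "simple_graph V E \<Longrightarrow> E a b \<Longrightarrow> a \<in> V \<and> b \<in> V" by (simp add: simple_graph_def)

lemma s115_found:
  assumes G: "simple_graph V E" and S: "\<not> contains_induced V E 8 S115"
  and "a \<noteq> b"
  and "E c a" "E c b" "E c s1" "E s1 s2" "E s2 s3" "E s3 s4" "E s4 s5"
  and "\<not> E a b" "\<not> E a s1" "\<not> E a s2" "\<not> E a s3" "\<not> E a s4" "\<not> E a s5"
  "\<not> E b s1" "\<not> E b s2" "\<not> E b s3" "\<not> E b s4" "\<not> E b s5"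
  "\<not> E c s2" "\<not> E c s3" "\<not> E c s4" "\<not> E c s5"
  "\<not> E s1 s3" "\<not> E s1 s4" "\<not> E s1 s5" "\<not> E s2 s4" "\<not> E s2 s5" "\<not> E s3 s5"
  shows False
proof -
  let ?l = "[c,a,b,s1,s2,s3,s4,s5]"
  have sym: "\<And>p q. E p q \<Longrightarrow> E q p" using G by (simp add: simple_graph_def)
  have irr: "\<And>p. \<not> E p p" using G by (simp add: simple_graph_def)
  have V: "\<And>p q. E p q \<Longrightarrow> p \<in> V \<and> q \<in> V" using G by (simp add: simple_graph_def)
  have d: "distinct ?l" using assms(3-) irr sym by auto
  have "contains_induced V E 8 S115"
    unfolding contains_induced_def
  proof (intro exI[of _ "nth ?l"] conjI)
    show "inj_on (nth ?l) {..<8}" by (rule inj_on_nth[OF d]) auto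
    show "nth ?l ` {..<8} \<subseteq> V" using assms(3-) V
      by (auto simp: lessThan_def less_Suc_eq numeral_eq_Suc)
    show "\<forall>i<8. \<forall>j<8. E (?l ! i) (?l ! j) = S115 i j"
      using assms(3-) sym irr unfolding S115_def pat_def
      by (simp add: All_less_Suc numeral_eq_Suc; blast)
  qed
  with S show False by simp
qed

lemma shared_edge:
  assumes G: "simple_graph V E" and K: "\<not> contains_induced V E 4 K4"
  and D: "\<not> contains_induced V E 4 diamond"
  and "E v a" "E v b" "E v d" "E a b" "E a d" "b \<noteq> d"
  shows False
proof -
  let ?l = "[v,a,b,d]"
  have sym: "\<And>p q. E p q \<Longrightarrow> E q p" using G by (simp add: simple_graph_def)
  have irr: "\<And>p. \<not> E p p" using G by (simp add: simple_graph_def)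
  have V: "\<And>p q. E p q \<Longrightarrow> p \<in> V \<and> q \<in> V" using G by (simp add: simple_graph_def)
  have dd: "distinct ?l" using assms(4-) irr sym by auto
  have inj: "inj_on (nth ?l) {..<4}" by (rule inj_on_nth[OF dd]) auto
  have sub: "nth ?l ` {..<4} \<subseteq> V" using assms(4-) V
      by (auto simp: lessThan_def less_Suc_eq numeral_eq_Suc)
  show False
  proof (cases "E b d")
    case True
    have "contains_induced V E 4 K4"
      unfolding contains_induced_def
      apply (intro exI[of _ "nth ?l"] conjI inj sub)
      using assms(4-) True sym irr unfolding K4_def pat_def
      by (simp add: All_less_Suc numeral_eq_Suc; blast)
    with K show False by simp
  next
    case False
    have "contains_induced V E 4 diamond"
      unfolding contains_induced_def
      apply (intro exI[of _ "nth ?l"] conjI inj sub)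
      using assms(4-) False sym irr unfolding diamond_def pat_def
      by (simp add: All_less_Suc numeral_eq_Suc; blast)
    with D show False by simp
  qed
qed

lemma two_edges:
  assumes G: "simple_graph V E" and K: "\<not> contains_induced V E 4 K4"
  and D: "\<not> contains_induced V E 4 diamond"
  and B: "\<not> contains_induced V E 5 butterfly"
  and e: "E v a" "E v b" "E v c" "E v d" "E a b" "E c d"
  and ne: "\<not> (a = c \<and> b = d)" "\<not> (a = d \<and> b = c)"
  shows False
proof -
  have sym: "\<And>p q. E p q \<Longrightarrow> E q p" using G by (simp add: simple_graph_def)
  have irr: "\<And>p. \<not> E p p" using G by (simp add: simple_graph_def)
  have V: "\<And>p q. E p q \<Longrightarrow> p \<in> V \<and> q \<in> V" using G by (simp add: simple_graph_def)
  note se = shared_edge[OF G K D]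
  show False
  proof (cases "E a c \<or> E a d \<or> E b c \<or> E b d \<or> a = c \<or> a = d \<or> b = c \<or> b = d")
    case True
    then show False using e ne sym irr se by metis
  next
    case False
    let ?l = "[a,b,c,d,v]"
    have dd: "distinct ?l" using e False irr sym by auto
    have "contains_induced V E 5 butterfly"
      unfolding contains_induced_def
      apply (intro exI[of _ "nth ?l"] conjI)
      apply (rule inj_on_nth[OF dd]) apply auto[1]
      using e V apply (auto simp: lessThan_def less_Suc_eq numeral_eq_Suc)[1]
      using e False sym irr unfolding butterfly_def pat_def
      by (simp add: All_less_Suc numeral_eq_Suc; blast)
    with B show False by simp
  qed
qed



lemma walk_V: "walk V E n a b \<Longrightarrow> b \<in> V"
  by (induction n arbitrary: a) auto

lemma walk_snoc: "simple_graph V E \<Longrightarrow> walk V E n a b \<Longrightarrow> E b c \<Longrightarrow> walk V E (Suc n) a c"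
  by (induction n arbitrary: a) (auto simp: simple_graph_def)

lemma walk_last: "simple_graph V E \<Longrightarrow> walk V E (Suc n) a c \<Longrightarrow> \<exists>b. walk V E n a b \<and> E b c"
proof (induction n arbitrary: a)
  case 0 then show ?case by (auto simp: simple_graph_def)
next
  case (Suc n)
  then obtain d where "E a d" "walk V E (Suc n) d c" by auto
  with Suc obtain b where "walk V E n d b" "E b c" by blast
  then show ?case using \<open>E a d\<close> by auto
qed

lemma walk_first: "walk V E n a b \<Longrightarrow> a \<in> V \<or> n > 0"
  by (cases n) auto

lemma lay_adj:
  assumes G: "simple_graph V E" and "a \<in> layer V E x y i" "b \<in> layer V E x y j" "E a b"
  shows "j \<le> i + 1"
proof (rule ccontr)
  assume "\<not> j \<le> i + 1"
  from assms(2) obtain s where "s \<in> {x,y}" "walk V E i s a"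
    by (auto simp: layer_def dist_set_eq_def)
  then have "walk V E (Suc i) s b" using walk_snoc[OF G] assms(4) by blast
  moreover have "Suc i < j" using \<open>\<not> j \<le> i + 1\<close> by simp
  ultimately show False using assms(3) \<open>s \<in> {x,y}\<close> by (auto simp: layer_def dist_set_eq_def)
qed

lemma far:
  assumes G: "simple_graph V E" and "a \<in> layer V E x y i" "b \<in> layer V E x y j" "i + 2 \<le> j \<or> j + 2 \<le> i"
  shows "\<not> E a b"
proof
  assume "E a b"
  then have "E b a" using G by (simp add: simple_graph_def)
  have "j \<le> i + 1" using lay_adj[OF G assms(2,3) \<open>E a b\<close>] .
  moreover have "i \<le> j + 1" using lay_adj[OF G assms(3,2) \<open>E b a\<close>] .
  ultimately show False using assms(4) by linarith
qed

lemma lay_unique: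
  assumes "a \<in> layer V E x y i" "a \<in> layer V E x y j" shows "i = j"
proof (rule ccontr)
  assume "i \<noteq> j"
  then have "i < j \<or> j < i" by arith
  then show False using assms by (auto simp: layer_def dist_set_eq_def)
qed

lemma lay_down:
  assumes G: "simple_graph V E" and b: "b \<in> layer V E x y (Suc i)"
  shows "\<exists>a \<in> layer V E x y i. E a b"
proof -
  from b obtain s where s: "s \<in> {x,y}" "walk V E (Suc i) s b"
    by (auto simp: layer_def dist_set_eq_def)
  then obtain a where a: "walk V E i s a" "E a b" using walk_last[OF G] by blast
  have "a \<in> V" using a G by (auto simp: simple_graph_def)
  have "\<not> walk V E j s' a" if "j < i" "s' \<in> {x,y}" for j s'
  proof
    assume "walk V E j s' a"
    then have "walk V E (Suc j) s' b" using walk_snoc[OF G] a(2) by blast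
    then show False using b that by (auto simp: layer_def dist_set_eq_def)
  qed
  then have "a \<in> layer V E x y i" using a s \<open>a \<in> V\<close> by (auto simp: layer_def dist_set_eq_def)
  then show ?thesis using a by blast
qed

lemma lay0: "x \<in> V \<Longrightarrow> y \<in> V \<Longrightarrow> x \<in> layer V E x y 0 \<and> y \<in> layer V E x y 0"
  by (auto simp: layer_def dist_set_eq_def)

lemma lay1: "a \<in> layer V E x y 1 \<Longrightarrow> (E x a \<or> E y a) \<and> a \<noteq> x \<and> a \<noteq> y"
  by (auto simp: layer_def dist_set_eq_def)

lemma lay_swap: "layer V E y x = layer V E x y"
  unfolding layer_def dist_set_eq_def by (simp add: insert_commute)


lemma four_distinct:
  assumes "finite S" "4 \<le> card S"
  shows "\<exists>a b c d. a \<in> S \<and> b \<in> S \<and> c \<in> S \<and> d \<in> S \<and> distinct [a,b,c,d]"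
proof -
  obtain T where "T \<subseteq> S" "card T = 4" using obtain_subset_with_card_n[OF assms(2)] by blast
  then show ?thesis by (simp add: card_Suc_eq numeral_eq_Suc) blast
qed


lemma main_aux:
  assumes G: "simple_graph V E"
    and S: "\<not> contains_induced V E 8 S115"
    and K: "\<not> contains_induced V E 4 K4"
    and D: "\<not> contains_induced V E 4 diamond"
    and B: "\<not> contains_induced V E 5 butterfly"
    and xy: "E x y"
    and ind: "independent E (layer V E x y 2)"
    and card5: "card (layer V E x y 2) \<ge> 5"
    and hu: "u \<in> layer V E x y 2"
    and ht: "t \<in> layer V E x y 3" and tu: "{w \<in> layer V E x y 2. E t w} = {u}"
    and hz1: "z1 \<in> layer V E x y 4"
    and hz2: "z2 \<in> layer V E x y 4 \<union> layer V E x y 5"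
    and hz3: "z3 \<in> layer V E x y 4 \<union> layer V E x y 5 \<union> layer V E x y 6"
    and ip: "induced_path V E [u, t, z1, z2, z3]"
    and hw: "w \<in> layer V E x y 1" and wu: "E w u" and xw: "E x w"
  shows False
proof -
  define L where "L = layer V E x y"
  have Esym: "E a b = E b a" for a b using G by (auto simp: simple_graph_def)
  have irr: "\<not> E a a" for a using G by (simp add: simple_graph_def)
  have xyV: "x \<in> V" "y \<in> V" using xy G by (auto simp: simple_graph_def)
  have hx: "x \<in> L 0" and hy: "y \<in> L 0" using lay0[OF xyV] unfolding L_def by auto
  have hu': "u \<in> L 2" and ht': "t \<in> L 3" and hz1': "z1 \<in> L 4" and hw': "w \<in> L 1"
    using hu ht hz1 hw unfolding L_def by auto
  have hz2': "z2 \<in> L 4 \<or> z2 \<in> L 5" and hz3': "z3 \<in> L 4 \<or> z3 \<in> L 5 \<or> z3 \<in> L 6"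
    using hz2 hz3 unfolding L_def by auto
  have farL: "\<not> E a b" if "a \<in> L i" "b \<in> L j" "i + 2 \<le> j" for a b i j
    using far[OF G, of a x y i b j] that unfolding L_def by auto
  have ipd: "\<forall>i<5. \<forall>j<5. E ([u, t, z1, z2, z3] ! i) ([u, t, z1, z2, z3] ! j) \<longleftrightarrow> (i = j + 1 \<or> j = i + 1)"
    using ip unfolding induced_path_def by simp
  have P: "E u t" "E t z1" "E z1 z2" "E z2 z3" "\<not> E u z1" "\<not> E u z2" "\<not> E u z3"
    "\<not> E t z2" "\<not> E t z3" "\<not> E z1 z3"
    using ipd[rule_format, of 0 1] ipd[rule_format, of 1 2] ipd[rule_format, of 2 3]
      ipd[rule_format, of 3 4] ipd[rule_format, of 0 2] ipd[rule_format, of 0 3]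
      ipd[rule_format, of 0 4] ipd[rule_format, of 1 3] ipd[rule_format, of 1 4]
      ipd[rule_format, of 2 4] by simp_all
  have R1: "\<not> E a z1 \<and> \<not> E a z2 \<and> \<not> E a z3 \<and> \<not> E z1 a \<and> \<not> E z2 a \<and> \<not> E z3 a"
    if "a \<in> L 0 \<union> L 1 \<union> L 2" for a
    using that hz1' hz2' hz3' farL Esym by (auto; metis add_2_eq_Suc' le_add_same_cancel2 le_numeral_extra(3) le_add2 le_add1 numeral_le_iff semiring_norm(68) semiring_norm(69) semiring_norm(71) semiring_norm(72) one_add_one numeral_Bit0 add_leD1)
  have R2: "\<not> E a t \<and> \<not> E t a" if "a \<in> L 0 \<union> L 1" for a
    using that ht' farL[of a 0 t 3] farL[of a 1 t 3] Esym by auto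
  have R3: "\<not> E a t \<and> \<not> E t a" if "a \<in> L 2" "a \<noteq> u" for a
    using that tu Esym unfolding L_def by auto
  have R4: "\<not> E a b \<and> \<not> E b a" if "a \<in> L 0" "b \<in> L 2" for a b
    using that farL[of a 0 b 2] Esym by auto
  have R5: "\<not> E a b" if "a \<in> L 2" "b \<in> L 2" for a b
    using that ind unfolding L_def independent_def by auto
  have Dst: "a \<noteq> b \<and> b \<noteq> a" if "a \<in> L i" "b \<in> L j" "i \<noteq> j" for a b i j
    using that lay_unique unfolding L_def by metis
  have L1: "(E x a \<or> E y a) \<and> a \<noteq> x \<and> a \<noteq> y" if "a \<in> L 1" for a
    using that lay1 unfolding L_def by metis
  have down: "\<exists>a \<in> L 1. E a p" if "p \<in> L 2" for p
    using that lay_down[OF G, of p x y 1] unfolding L_def by (simp add: numeral_eq_Suc)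
  note S1 = s115_found[OF G S]
  note TE = two_edges[OF G K D B]
  note facts = hx hy hu' ht' hz1' hw' P wu xw
  note RR = R1 R2 R3 R4 R5

  have F1: "p = u" if a: "a \<in> L 1" "E a u" "p \<in> L 2" "E a p" for a p
  proof (rule ccontr)
    assume pu: "p \<noteq> u"
    obtain c where c: "c \<in> L 0" "E a c" using L1[OF a(1)] hx hy Esym by blast
    show False
      by (rule S1[of c p a u t z1 z2 z3]) (use facts a c pu Dst[of c 0 p 2] in \<open>auto simp: Esym RR\<close>)
  qed
  have wp: "\<not> E w p" if "p \<in> L 2" "p \<noteq> u" for p using F1[OF hw' wu that(1)] that by auto

  have F2: "p = q" if a: "a \<in> L 1" "\<not> E a u" "p \<in> L 2" "E a p" "q \<in> L 2" "E a q" for a p q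
  proof (rule ccontr)
    assume pq: "p \<noteq> q"
    have pu: "p \<noteq> u" "q \<noteq> u" using a by auto
    note ff = facts a pq pu wp[of p] wp[of q]
    show False
    proof (cases "E a w")
      case True
      show False by (rule S1[of p q a w u t z1 z2]) (use ff True in \<open>auto simp: Esym RR\<close>)
    next
      case aw: False
      show False
      proof (cases "E x a")
        case True
        show False by (rule S1[of p q a x w u t z1]) (use ff True aw in \<open>auto simp: Esym RR\<close>)
      next
        case xa: False
        then have ya: "E y a" using L1[OF a(1)] by auto
        show False
        proof (cases "E y w")
          case True
          show False by (rule S1[of p q a y w u t z1]) (use ff True aw ya xa in \<open>auto simp: Esym RR\<close>)
        next
          case False
          show False by (rule S1[of p q a y x w u t]) (use ff False aw ya xa xy in \<open>auto simp: Esym RR\<close>)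
        qed
      qed
    qed
  qed

  have yx: "E y x" using xy Esym by simp
  have CA: False if a: "a \<in> L 1" "a' \<in> L 1" "p \<in> L 2" "p' \<in> L 2" "p \<noteq> u" "p' \<noteq> u"
     "E a p" "E a' p'" "\<not> E a u" "\<not> E a' u" "a \<noteq> a'" "E x a" "E x a'" for a a' p p'
  proof -
    have aw: "a \<noteq> w" "a' \<noteq> w" using a wu by auto
    have ay: "a \<noteq> y" "a' \<noteq> y" using L1 a by auto
    note ff = facts a aw ay xy
    consider "\<not> E a a' \<and> \<not> E a w \<and> \<not> E a' w" | "E a a'" | "E a w" | "E a' w" by blast
    then show False
    proof cases
      case 1
      show False by (rule S1[of a a' x w u t z1 z2]) (use ff 1 in \<open>auto simp: Esym RR\<close>)
    next
      case 2
      have "\<not> E a w" "\<not> E y a" "\<not> E y w" "\<not> E a' w"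
        using TE[of x a a' a w] TE[of x a a' y a] TE[of x a a' y w] TE[of x a a' a' w] ff 2 Esym by auto
      then show False by (rule_tac S1[of y a x w u t z1 z2]) (use ff 2 in \<open>auto simp: Esym RR\<close>)
    next
      case 3
      have "\<not> E a' w" "\<not> E y a'" "\<not> E y w"
        using TE[of x a w a' w] TE[of x a w y a'] TE[of x a w y w] ff 3 Esym by auto
      then show False by (rule_tac S1[of y a' x w u t z1 z2]) (use ff 3 in \<open>auto simp: Esym RR\<close>)
    next
      case 4
      have "\<not> E a w" "\<not> E y a" "\<not> E y w"
        using TE[of x a' w a w] TE[of x a' w y a] TE[of x a' w y w] ff 4 Esym by auto
      then show False by (rule_tac S1[of y a x w u t z1 z2]) (use ff 4 in \<open>auto simp: Esym RR\<close>)
    qed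
  qed

  have BW: False if b: "b \<in> L 1" "p \<in> L 2" "p \<noteq> u" "E b p" "\<not> E b u" "E y b" "\<not> E y w" "E b w" for b p
    by (rule S1[of y p b w u t z1 z2])
       (use facts b wp[of p] Dst[of y 0 p 2] in \<open>auto simp: Esym RR\<close>)
  have CB: False if b: "b1 \<in> L 1" "b2 \<in> L 1" "b3 \<in> L 1" "p1 \<in> L 2" "p2 \<in> L 2" "p3 \<in> L 2"
     "p1 \<noteq> u" "p2 \<noteq> u" "p3 \<noteq> u" "E b1 p1" "E b2 p2" "E b3 p3"
     "\<not> E b1 u" "\<not> E b2 u" "\<not> E b3 u" "b1 \<noteq> b2" "b1 \<noteq> b3" "b2 \<noteq> b3"
     "\<not> E x b1" "\<not> E x b2" "\<not> E x b3" for b1 b2 b3 p1 p2 p3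
  proof -
    have yb: "E y b1" "E y b2" "E y b3" using L1 b by auto
    have bx: "b1 \<noteq> x" "b2 \<noteq> x" "b3 \<noteq> x" using L1 b by auto
    note ff = facts b yb bx xy yx
    show False
    proof (cases "E y w")
      case True
      have "\<not> E b1 b2" "\<not> E b1 w" "\<not> E b2 w"
        using TE[of y x w b1 b2] TE[of y x w b1 w] TE[of y x w b2 w] ff True Esym by auto
      then show False by (rule_tac S1[of b1 b2 y w u t z1 z2]) (use ff True in \<open>auto simp: Esym RR\<close>)
    next
      case yw: False
      have nw: "\<not> E b1 w" "\<not> E b2 w" "\<not> E b3 w"
        using BW[of b1 p1] BW[of b2 p2] BW[of b3 p3] b yb yw by auto
      show False
      proof (cases "E b1 b2")
        case False
        show False by (rule S1[of b1 b2 y x w u t z1]) (use ff False nw yw in \<open>auto simp: Esym RR\<close>)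
      next
        case True
        have "\<not> E b1 b3" using TE[of y b1 b2 b1 b3] ff True by auto
        then show False by (rule_tac S1[of b1 b3 y x w u t z1]) (use ff nw yw in \<open>auto simp: Esym RR\<close>)
      qed
    qed
  qed

  have finL: "finite (L 2)" using G unfolding L_def layer_def simple_graph_def by auto
  have "card (L 2 - {u}) \<ge> 4" using card5 hu' finL unfolding L_def by (simp add: card_Diff_singleton)
  then obtain p1 p2 p3 p4 where p: "p1 \<in> L 2 - {u}" "p2 \<in> L 2 - {u}" "p3 \<in> L 2 - {u}" "p4 \<in> L 2 - {u}"
    "distinct [p1, p2, p3, p4]"
    using four_distinct[of "L 2 - {u}"] finL by blast
  obtain a1 where a1: "a1 \<in> L 1" "E a1 p1" using down p by blast
  obtain a2 where a2: "a2 \<in> L 1" "E a2 p2" using down p by blast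
  obtain a3 where a3: "a3 \<in> L 1" "E a3 p3" using down p by blast
  obtain a4 where a4: "a4 \<in> L 1" "E a4 p4" using down p by blast
  have au: "\<not> E a1 u" "\<not> E a2 u" "\<not> E a3 u" "\<not> E a4 u"
    using F1 a1 a2 a3 a4 p by blast+
  have ad: "a1 \<noteq> a2" "a1 \<noteq> a3" "a1 \<noteq> a4" "a2 \<noteq> a3" "a2 \<noteq> a4" "a3 \<noteq> a4"
    using F2 a1 a2 a3 a4 au p by (metis DiffD1 distinct_length_2_or_more distinct_removeAll removeAll.simps(2))+
  note A = a1 a2 a3 a4 au ad p
  have "\<not> (E x a1 \<and> E x a2)" using CA[of a1 a2 p1 p2] A by auto
  moreover have "\<not> (E x a1 \<and> E x a3)" using CA[of a1 a3 p1 p3] A by auto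
  moreover have "\<not> (E x a1 \<and> E x a4)" using CA[of a1 a4 p1 p4] A by auto
  moreover have "\<not> (E x a2 \<and> E x a3)" using CA[of a2 a3 p2 p3] A by auto
  moreover have "\<not> (E x a2 \<and> E x a4)" using CA[of a2 a4 p2 p4] A by auto
  moreover have "\<not> (E x a3 \<and> E x a4)" using CA[of a3 a4 p3 p4] A by auto
  moreover have "\<not> (\<not> E x a1 \<and> \<not> E x a2 \<and> \<not> E x a3)" using CB[of a1 a2 a3 p1 p2 p3] A by auto
  moreover have "\<not> (\<not> E x a1 \<and> \<not> E x a2 \<and> \<not> E x a4)" using CB[of a1 a2 a4 p1 p2 p4] A by auto
  moreover have "\<not> (\<not> E x a1 \<and> \<not> E x a3 \<and> \<not> E x a4)" using CB[of a1 a3 a4 p1 p3 p4] A by auto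
  moreover have "\<not> (\<not> E x a2 \<and> \<not> E x a3 \<and> \<not> E x a4)" using CB[of a2 a3 a4 p2 p3 p4] A by auto
  ultimately show False by blast
qed

theorem lemma22:
  fixes V :: "'a set" and E :: "'a \<Rightarrow> 'a \<Rightarrow> bool" and x y r :: 'a
  assumes "simple_graph V E"
    and "\<not> contains_induced V E 8 S115"
    and "\<not> contains_induced V E 4 K4"
    and "\<not> contains_induced V E 4 diamond"
    and "\<not> contains_induced V E 5 butterfly"
    and "E x y"
    and "r \<in> V" and "E r x" and "\<not> E r y"
    and "independent E (layer V E x y 2)"
    and "card (layer V E x y 2) \<ge> 5"
  shows "\<not> (\<exists>u t z1 z2 z3. u \<in> layer V E x y 2
              \<and> t \<in> layer V E x y 3 \<and> {w \<in> layer V E x y 2. E t w} = {u}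
              \<and> z1 \<in> layer V E x y 4
              \<and> z2 \<in> layer V E x y 4 \<union> layer V E x y 5
              \<and> z3 \<in> layer V E x y 4 \<union> layer V E x y 5 \<union> layer V E x y 6
              \<and> induced_path V E [u, t, z1, z2, z3])"
proof
  assume "\<exists>u t z1 z2 z3. u \<in> layer V E x y 2
              \<and> t \<in> layer V E x y 3 \<and> {w \<in> layer V E x y 2. E t w} = {u}
              \<and> z1 \<in> layer V E x y 4
              \<and> z2 \<in> layer V E x y 4 \<union> layer V E x y 5
              \<and> z3 \<in> layer V E x y 4 \<union> layer V E x y 5 \<union> layer V E x y 6
              \<and> induced_path V E [u, t, z1, z2, z3]"
  then obtain u t z1 z2 z3 where h: "u \<in> layer V E x y 2"
              "t \<in> layer V E x y 3" "{w \<in> layer V E x y 2. E t w} = {u}"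
              "z1 \<in> layer V E x y 4"
              "z2 \<in> layer V E x y 4 \<union> layer V E x y 5"
              "z3 \<in> layer V E x y 4 \<union> layer V E x y 5 \<union> layer V E x y 6"
              "induced_path V E [u, t, z1, z2, z3]" by blast
  obtain w where w: "w \<in> layer V E x y 1" "E w u"
    using lay_down[OF assms(1), of u x y 1] h(1) by (auto simp: numeral_eq_Suc)
  have "E x w \<or> E y w" using lay1[OF w(1)] by simp
  then show False
  proof
    assume "E x w"
    then show False using main_aux[OF assms(1-6) assms(10,11) h w] by simp
  next
    assume yw: "E y w"
    have yx: "E y x" using assms(1,6) by (simp add: simple_graph_def)
    show False using main_aux[OF assms(1-5) yx, of u t z1 z2 z3 w] assms(10,11) h w yw
      by (simp add: lay_swap)
  qed
qed

end
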